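(* Let $(\mathfrak D,d)$ be a finite metric space, $p\in(1,\infty)$, $\vartheta\in\mathcal P(\mathfrak D)$, $\{\mu_k\}_{k\in\mathbb{N}}$ a countable dense subset of $(\mathcal P(\mathfrak D),W_p)$, and for each $k$ let $(\varphi_k,\psi_k)$ be functions on $\mathfrak D$ with $\psi_k=\varphi_k^c$, $\varphi_k=\psi_k^c$ and $W_p^p(\vartheta,\mu_k)=\int\varphi_k\,d\mu_k+\int\psi_k\,d\vartheta$. With $G_I(\mu):=\max_{k\in I}(\int\varphi_kd\mu+\int\psi_kd\vartheta)$ and $F(\mu):=W_p^p(\vartheta,\mu)$, \[\sup_{\mu\in\mathcal P(\mathfrak D)}|F(\mu)-G_{\{1,\dots,j\}}(\mu)|\to0\qquad\text{as }j\to\infty.\]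
   Context: $\mathcal P(\mathfrak D)$ is the set of probability measures on $\mathfrak D$, $W_p$ the $p$-Wasserstein distance with cost $d^p$; $\varphi^c(x):=\inf_{y\in\mathfrak D}(d(x,y)^p-\varphi(y))$. *)

theory Defs
  imports "HOL-Probability.Probability"
begin

text \<open>Finite metric space: a finite type of class metric_space. Probability measures: 'a pmf.\<close>

definition integ :: "'a pmf \<Rightarrow> ('a \<Rightarrow> real) \<Rightarrow> real" where
  "integ \<mu> f = measure_pmf.expectation \<mu> f"

definition couplings :: "'a pmf \<Rightarrow> 'b pmf \<Rightarrow> ('a \<times> 'b) pmf set" where
  "couplings \<mu> \<nu> = {\<pi>. map_pmf fst \<pi> = \<mu> \<and> map_pmf snd \<pi> = \<nu>}"

definition wass_pow :: "real \<Rightarrow> ('a::metric_space) pmf \<Rightarrow> 'a pmf \<Rightarrow> real" where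
  "wass_pow p \<mu> \<nu> = (INF \<pi>\<in>couplings \<mu> \<nu>. integ \<pi> (\<lambda>(x,y). dist x y powr p))"

definition wass :: "real \<Rightarrow> ('a::metric_space) pmf \<Rightarrow> 'a pmf \<Rightarrow> real" where
  "wass p \<mu> \<nu> = wass_pow p \<mu> \<nu> powr (1 / p)"

definition c_transform :: "real \<Rightarrow> (('a::metric_space) \<Rightarrow> real) \<Rightarrow> 'a \<Rightarrow> real" where
  "c_transform p \<phi> x = (INF y. dist x y powr p - \<phi> y)"

end

theory Submission
  imports Defs
begin

lemma integrable_fin[simp]: "integrable (measure_pmf (M::('a::finite) pmf)) (f::'a \<Rightarrow> real)"
  by (rule integrable_measure_pmf_finite) simp

lemma couplings_ne: "pair_pmf \<alpha> \<beta> \<in> couplings \<alpha> \<beta>"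
  by (simp add: couplings_def map_fst_pair_pmf map_snd_pair_pmf)

lemma cost_nonneg: "0 \<le> integ \<pi> (\<lambda>(x,y). dist x y powr p)"
  unfolding integ_def by (rule integral_nonneg_AE) auto

lemma bdd_cost: "bdd_below ((\<lambda>\<pi>. integ \<pi> (\<lambda>(x,y). dist x y powr p)) ` A)"
  by (rule bdd_belowI[where m=0]) (auto simp: cost_nonneg)

lemma wass_pow_le: "\<pi> \<in> couplings \<alpha> \<beta> \<Longrightarrow> wass_pow p \<alpha> \<beta> \<le> integ \<pi> (\<lambda>(x,y). dist x y powr p)"
  unfolding wass_pow_def by (rule cINF_lower[OF bdd_cost])

lemma wass_pow_ge: "(\<And>\<pi>. \<pi> \<in> couplings \<alpha> \<beta> \<Longrightarrow> B \<le> integ \<pi> (\<lambda>(x,y). dist x y powr p)) \<Longrightarrow> B \<le> wass_pow p \<alpha> \<beta>"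
  unfolding wass_pow_def by (rule cINF_greatest) (use couplings_ne in auto)

lemma wass_pow_nonneg: "0 \<le> wass_pow p \<alpha> \<beta>"
  by (rule wass_pow_ge) (rule cost_nonneg)

lemma wass_pow_scale:
  assumes "K \<ge> 0" "\<And>\<pi>. \<pi> \<in> couplings \<alpha> \<beta> \<Longrightarrow> X \<le> K * integ \<pi> (\<lambda>(x,y). dist x y powr p)"
  shows "X \<le> K * wass_pow p \<alpha> \<beta>"
proof (cases "K = 0")
  case True then show ?thesis using assms(2)[OF couplings_ne] by simp
next
  case False
  then have "X / K \<le> wass_pow p \<alpha> \<beta>"
    using assms by (intro wass_pow_ge) (simp add: divide_le_eq mult.commute)
  then show ?thesis using False assms(1) by (simp add: divide_le_eq mult.commute)
qed

lemma wass_small: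
  assumes "0 < p" "wass p \<alpha> \<beta> < \<eta> powr (1/p)" "0 < \<eta>"
  shows "wass_pow p \<alpha> \<beta> < \<eta>"
proof (rule ccontr)
  assume "\<not> ?thesis"
  then have "\<eta> powr (1/p) \<le> wass_pow p \<alpha> \<beta> powr (1/p)"
    using assms by (intro powr_mono2) auto
  then show False using assms(2) unfolding wass_def by simp
qed

lemma integ_fst: "map_pmf fst \<pi> = \<alpha> \<Longrightarrow> integ \<alpha> f = integ \<pi> (\<lambda>z. f (fst z))"
  unfolding integ_def by (metis integral_map_pmf)
lemma integ_snd: "map_pmf snd \<pi> = \<alpha> \<Longrightarrow> integ \<alpha> f = integ \<pi> (\<lambda>z. f (snd z))"
  unfolding integ_def by (metis integral_map_pmf)

lemma integ_mono:
  fixes \<pi> :: "('a::finite) pmf"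
  shows "(\<And>z. z \<in> set_pmf \<pi> \<Longrightarrow> f z \<le> g z) \<Longrightarrow> integ \<pi> f \<le> integ \<pi> g"
  unfolding integ_def by (rule integral_mono_AE) (auto simp: AE_measure_pmf_iff)

lemma integ_add: "integ (\<pi>::('a::finite) pmf) (\<lambda>z. f z + g z) = integ \<pi> f + integ \<pi> g"
  unfolding integ_def by (rule Bochner_Integration.integral_add) auto
lemma integ_diff: "integ (\<pi>::('a::finite) pmf) (\<lambda>z. f z - g z) = integ \<pi> f - integ \<pi> g"
  unfolding integ_def by (rule Bochner_Integration.integral_diff) auto
lemma integ_cmult: "integ (\<pi>::('a::finite) pmf) (\<lambda>z. c * f z) = c * integ \<pi> f"
  unfolding integ_def by simp

lemma glue:
  assumes "map_pmf snd \<pi>1 = map_pmf fst \<pi>2"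
  shows "\<exists>\<tau>. (\<forall>ab\<in>set_pmf \<tau>. snd (fst ab) = fst (snd ab)) \<and> map_pmf fst \<tau> = \<pi>1 \<and> map_pmf snd \<tau> = \<pi>2"
proof -
  have r1: "rel_pmf (\<lambda>a y. snd a = y) \<pi>1 (map_pmf snd \<pi>1)"
    unfolding pmf.in_rel
    by (rule exI[of _ "map_pmf (\<lambda>a. (a, snd a)) \<pi>1"]) (auto simp: pmf.map_comp o_def)
  have r2: "rel_pmf (\<lambda>y b. y = fst b) (map_pmf fst \<pi>2) \<pi>2"
    unfolding pmf.in_rel
    by (rule exI[of _ "map_pmf (\<lambda>b. (fst b, b)) \<pi>2"]) (auto simp: pmf.map_comp o_def)
  have "rel_pmf ((\<lambda>a y. snd a = y) OO (\<lambda>y b. y = fst b)) \<pi>1 \<pi>2"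
    unfolding pmf.rel_compp using r1 r2 assms by auto
  then have "rel_pmf (\<lambda>a b. snd a = fst b) \<pi>1 \<pi>2" by (simp add: OO_def)
  then obtain z where "set_pmf z \<subseteq> {(a, b). snd a = fst b}" "map_pmf fst z = \<pi>1" "map_pmf snd z = \<pi>2"
    unfolding pmf.in_rel by auto
  then show ?thesis by (intro exI[of _ z]) auto
qed


lemma K_exists:
  "\<exists>K\<ge>0. \<forall>x y z::'a::{metric_space,finite}. dist x z powr p \<le> dist x y powr p + K * dist y z powr p"
proof -
  define K where "K = Max (range (\<lambda>(a::'a,b::'a,c::'a,e::'a). dist a b powr p / dist c e powr p))"
  have Kge: "dist a b powr p / dist c e powr p \<le> K" for a b c e :: 'a
    unfolding K_def apply (rule Max_ge) apply simp
    by (rule image_eqI[where x="(a,b,c,e)"]) auto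
  have "0 \<le> K" using Kge[of undefined undefined undefined undefined] by simp
  moreover have "dist x z powr p \<le> dist x y powr p + K * dist y z powr p" for x y z :: 'a
  proof (cases "y = z")
    case True then show ?thesis by simp
  next
    case False
    then have pos: "0 < dist y z powr p" by simp
    have "dist x z powr p = (dist x z powr p / dist y z powr p) * dist y z powr p" using pos by simp
    also have "\<dots> \<le> K * dist y z powr p" using Kge[of x z y z] pos by (intro mult_right_mono) auto
    finally show ?thesis using powr_ge_zero[of "dist x y" p] by linarith
  qed
  ultimately show ?thesis by blast
qed

lemma ctrans_le: "c_transform p \<phi> x \<le> dist x y powr p - \<phi> (y::'a::{metric_space,finite})"
  unfolding c_transform_def by (rule cINF_lower) (auto intro: bdd_below_finite)

lemma ctrans_att: "\<exists>w. c_transform p \<phi> x = dist x w powr p - \<phi> (w::'a::{metric_space,finite})"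
proof -
  have "c_transform p \<phi> x = Min (range (\<lambda>y. dist x y powr p - \<phi> y))"
    unfolding c_transform_def by (rule cInf_eq_Min) auto
  moreover have "Min (range (\<lambda>y. dist x y powr p - \<phi> y)) \<in> range (\<lambda>y. dist x y powr p - \<phi> y)"
    by (rule Min_in) auto
  then obtain w where "Min (range (\<lambda>y. dist x y powr p - \<phi> y)) = dist x w powr p - \<phi> w" by blast
  ultimately show ?thesis by auto
qed

lemma G_le_F:
  fixes \<theta> \<nu> :: "('a::{metric_space,finite}) pmf"
  assumes "\<And>x y. \<psi> x + \<phi> y \<le> dist x y powr p"
  shows "integ \<theta> \<psi> + integ \<nu> \<phi> \<le> wass_pow p \<theta> \<nu>"
proof (rule wass_pow_ge)
  fix \<pi> assume "\<pi> \<in> couplings \<theta> \<nu>"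
  then have m: "map_pmf fst \<pi> = \<theta>" "map_pmf snd \<pi> = \<nu>" by (auto simp: couplings_def)
  have "integ \<theta> \<psi> + integ \<nu> \<phi> = integ \<pi> (\<lambda>z. \<psi> (fst z) + \<phi> (snd z))"
    by (simp add: integ_add integ_fst[OF m(1)] integ_snd[OF m(2)])
  also have "\<dots> \<le> integ \<pi> (\<lambda>(x,y). dist x y powr p)"
    by (rule integ_mono) (auto simp: assms)
  finally show "integ \<theta> \<psi> + integ \<nu> \<phi> \<le> integ \<pi> (\<lambda>(x,y). dist x y powr p)" .
qed

lemma phi_lip:
  fixes y z :: "'a::{metric_space,finite}"
  assumes T: "\<forall>x y z::'a. dist x z powr p \<le> dist x y powr p + K * dist y z powr p"
  shows "c_transform p \<psi> y - c_transform p \<psi> z \<le> K * dist y z powr p"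
proof -
  obtain w where w: "c_transform p \<psi> z = dist z w powr p - \<psi> w" using ctrans_att by blast
  have "c_transform p \<psi> y \<le> dist y w powr p - \<psi> w" by (rule ctrans_le)
  moreover have "dist w y powr p \<le> dist w z powr p + K * dist z y powr p" using T by blast
  ultimately show ?thesis using w by (simp add: dist_commute)
qed

lemma lemL:
  fixes \<theta> \<alpha> \<beta> :: "('a::{metric_space,finite}) pmf"
  assumes T: "\<forall>x y z::'a. dist x z powr p \<le> dist x y powr p + K * dist y z powr p"
    and K: "0 \<le> K"
    and lip: "\<And>y z. \<phi> y - \<phi> z \<le> K * dist y z powr p"
  shows "wass_pow p \<theta> \<beta> - integ \<beta> \<phi> \<le> wass_pow p \<theta> \<alpha> - integ \<alpha> \<phi> + 2 * K * wass_pow p \<alpha> \<beta>"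
proof -
  have key: "wass_pow p \<theta> \<beta> - integ \<beta> \<phi> + integ \<alpha> \<phi> - wass_pow p \<theta> \<alpha> \<le> (2*K) * integ \<pi>2 (\<lambda>(x,y). dist x y powr p)"
    if p2: "\<pi>2 \<in> couplings \<alpha> \<beta>" for \<pi>2
  proof -
    have m2: "map_pmf fst \<pi>2 = \<alpha>" "map_pmf snd \<pi>2 = \<beta>" using p2 by (auto simp: couplings_def)
    have A: "integ \<alpha> \<phi> - integ \<beta> \<phi> \<le> K * integ \<pi>2 (\<lambda>(x,y). dist x y powr p)"
    proof -
      have "integ \<alpha> \<phi> - integ \<beta> \<phi> = integ \<pi>2 (\<lambda>z. \<phi> (fst z) - \<phi> (snd z))"
        by (simp add: integ_diff integ_fst[OF m2(1)] integ_snd[OF m2(2)])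
      also have "\<dots> \<le> integ \<pi>2 (\<lambda>z. K * (case z of (x,y) \<Rightarrow> dist x y powr p))"
        by (rule integ_mono) (auto simp: lip split: prod.splits)
      finally show ?thesis by (simp add: integ_cmult)
    qed
    have B: "wass_pow p \<theta> \<beta> - integ \<beta> \<phi> + integ \<alpha> \<phi> - 2 * K * integ \<pi>2 (\<lambda>(x,y). dist x y powr p) \<le> wass_pow p \<theta> \<alpha>"
    proof (rule wass_pow_ge)
      fix \<pi>1 assume p1: "\<pi>1 \<in> couplings \<theta> \<alpha>"
      have m1: "map_pmf fst \<pi>1 = \<theta>" "map_pmf snd \<pi>1 = \<alpha>" using p1 by (auto simp: couplings_def)
      obtain \<tau> where tau: "\<forall>ab\<in>set_pmf \<tau>. snd (fst ab) = fst (snd ab)" "map_pmf fst \<tau> = \<pi>1" "map_pmf snd \<tau> = \<pi>2"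
        using glue[of \<pi>1 \<pi>2] m1 m2 by auto
      define \<gamma> where "\<gamma> = map_pmf (\<lambda>ab. (fst (fst ab), snd (snd ab))) \<tau>"
      have "\<gamma> \<in> couplings \<theta> \<beta>"
        unfolding couplings_def \<gamma>_def using tau m1 m2
        by (auto simp: pmf.map_comp o_def)
      then have "wass_pow p \<theta> \<beta> \<le> integ \<gamma> (\<lambda>(x,y). dist x y powr p)" by (rule wass_pow_le)
      also have "\<dots> = integ \<tau> (\<lambda>ab. dist (fst (fst ab)) (snd (snd ab)) powr p)"
        unfolding \<gamma>_def integ_def by simp
      also have "\<dots> \<le> integ \<tau> (\<lambda>ab. dist (fst (fst ab)) (snd (fst ab)) powr p + K * dist (fst (snd ab)) (snd (snd ab)) powr p)"
        by (rule integ_mono) (use T tau(1) in metis)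
      also have "\<dots> = integ \<pi>1 (\<lambda>(x,y). dist x y powr p) + K * integ \<pi>2 (\<lambda>(x,y). dist x y powr p)"
        by (simp add: integ_add integ_cmult integ_fst[OF tau(2)] integ_snd[OF tau(3)] case_prod_beta)
      finally show "wass_pow p \<theta> \<beta> - integ \<beta> \<phi> + integ \<alpha> \<phi> - 2 * K * integ \<pi>2 (\<lambda>(x,y). dist x y powr p) \<le> integ \<pi>1 (\<lambda>(x,y). dist x y powr p)"
        using A by simp
    qed
    show ?thesis using B by simp
  qed
  have "wass_pow p \<theta> \<beta> - integ \<beta> \<phi> + integ \<alpha> \<phi> - wass_pow p \<theta> \<alpha> \<le> (2*K) * wass_pow p \<alpha> \<beta>"
    by (rule wass_pow_scale) (use K key in auto)
  then show ?thesis by simp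
qed


lemma sumU: "(\<Sum>z\<in>(UNIV::('a::finite \<times> 'a) set). g z) = (\<Sum>x\<in>UNIV. \<Sum>y\<in>UNIV. g (x,y))"
  by (simp add: sum.cartesian_product)

lemma tv_bound:
  fixes \<alpha> \<beta> :: "('a::{metric_space,finite}) pmf"
  assumes D: "\<And>x y::'a. dist x y powr p \<le> D" and D0: "0 \<le> D"
  shows "wass_pow p \<alpha> \<beta> \<le> D * (\<Sum>x\<in>UNIV. \<bar>pmf \<alpha> x - pmf \<beta> x\<bar>)"
proof -
  define m where "m x = min (pmf \<alpha> x) (pmf \<beta> x)" for x
  define a where "a x = pmf \<alpha> x - m x" for x
  define b where "b x = pmf \<beta> x - m x" for x
  define t where "t = (\<Sum>x\<in>UNIV. a x)"
  have a0: "0 \<le> a x" and b0: "0 \<le> b x" and m0: "0 \<le> m x" for x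
    by (auto simp: a_def b_def m_def)
  have s\<alpha>: "(\<Sum>x\<in>UNIV. pmf \<alpha> x) = 1" and s\<beta>: "(\<Sum>x\<in>UNIV. pmf \<beta> x) = 1"
    by (auto intro: sum_pmf_eq_1)
  have tb: "(\<Sum>x\<in>UNIV. b x) = t"
    using s\<alpha> s\<beta> by (simp add: t_def a_def b_def sum_subtractf)
  have sm: "(\<Sum>x\<in>UNIV. m x) = 1 - t"
    using s\<alpha> by (simp add: t_def a_def sum_subtractf)
  have t0: "0 \<le> t" unfolding t_def by (rule sum_nonneg) (simp add: a0)
  have at: "a x * t / t = a x" for x
  proof (cases "t = 0")
    case True
    then have "\<forall>x\<in>UNIV. a x = 0" unfolding t_def using a0 by (subst sum_nonneg_eq_0_iff[symmetric]) auto
    then show ?thesis by simp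
  qed simp
  have bt: "t * b y / t = b y" for y
  proof (cases "t = 0")
    case True
    then have "\<forall>x\<in>UNIV. b x = 0" using tb b0 by (subst sum_nonneg_eq_0_iff[symmetric]) auto
    then show ?thesis by simp
  qed simp
  define f where "f z = (if fst z = snd z then m (fst z) else 0) + a (fst z) * b (snd z) / t" for z
  have f0: "0 \<le> f z" for z unfolding f_def using a0 b0 m0 t0 by auto
  have row: "(\<Sum>y\<in>UNIV. f (x,y)) = pmf \<alpha> x" for x
  proof -
    have "(\<Sum>y\<in>UNIV. f (x,y)) = (\<Sum>y\<in>UNIV. (if x = y then m x else 0)) + (\<Sum>y\<in>UNIV. a x * b y / t)"
      unfolding f_def by (simp add: sum.distrib)
    also have "\<dots> = m x + a x * t / t"
      by (simp add: sum_divide_distrib[symmetric] sum_distrib_left[symmetric] tb)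
    finally show ?thesis using at by (simp add: a_def)
  qed
  have col: "(\<Sum>x\<in>UNIV. f (x,y)) = pmf \<beta> y" for y
  proof -
    have "(\<Sum>x\<in>UNIV. f (x,y)) = (\<Sum>x\<in>UNIV. (if x = y then m y else 0)) + (\<Sum>x\<in>UNIV. a x * b y / t)"
      unfolding f_def by (intro trans[OF sum.distrib] arg_cong2[where f="(+)"] sum.cong) auto
    also have "\<dots> = m y + t * b y / t"
      by (simp add: sum_divide_distrib[symmetric] sum_distrib_right[symmetric] t_def)
    finally show ?thesis using bt by (simp add: b_def)
  qed
  have f1: "(\<Sum>z\<in>UNIV. f z) = 1"
    using s\<alpha> by (simp add: sumU row)
  have nn: "(\<integral>\<^sup>+z. ennreal (f z) \<partial>count_space UNIV) = 1"
    by (simp add: nn_integral_count_space_finite sum_ennreal f0 f1)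
  define \<pi> where "\<pi> = embed_pmf f"
  have pf: "pmf \<pi> z = f z" for z unfolding \<pi>_def by (rule pmf_embed_pmf[OF f0 nn])
  have "map_pmf fst \<pi> = \<alpha>"
  proof (rule pmf_eqI)
    fix x :: 'a
    have "fst -` {x} = Pair x ` (UNIV::'a set)" by auto
    then have "pmf (map_pmf fst \<pi>) x = (\<Sum>z\<in>Pair x ` (UNIV::'a set). f z)"
      by (simp add: pmf_map measure_measure_pmf_finite pf)
    also have "\<dots> = (\<Sum>y\<in>UNIV. f (x,y))" by (subst sum.reindex) (auto simp: inj_on_def)
    finally show "pmf (map_pmf fst \<pi>) x = pmf \<alpha> x" using row by simp
  qed
  moreover have "map_pmf snd \<pi> = \<beta>"
  proof (rule pmf_eqI)
    fix y :: 'a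
    have "snd -` {y} = (\<lambda>x. (x,y)) ` (UNIV::'a set)" by auto
    then have "pmf (map_pmf snd \<pi>) y = (\<Sum>z\<in>(\<lambda>x. (x,y)) ` (UNIV::'a set). f z)"
      by (simp add: pmf_map measure_measure_pmf_finite pf)
    also have "\<dots> = (\<Sum>x\<in>UNIV. f (x,y))" by (subst sum.reindex) (auto simp: inj_on_def)
    finally show "pmf (map_pmf snd \<pi>) y = pmf \<beta> y" using col by simp
  qed
  ultimately have "\<pi> \<in> couplings \<alpha> \<beta>" by (simp add: couplings_def)
  then have "wass_pow p \<alpha> \<beta> \<le> integ \<pi> (\<lambda>(x,y). dist x y powr p)" by (rule wass_pow_le)
  also have "\<dots> = (\<Sum>z\<in>UNIV. (case z of (x,y) \<Rightarrow> dist x y powr p) * f z)"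
    unfolding integ_def by (subst integral_measure_pmf_real[where A=UNIV]) (auto simp: pf)
  also have "\<dots> \<le> (\<Sum>z\<in>UNIV. D * (a (fst z) * b (snd z) / t))"
  proof (rule sum_mono)
    fix z :: "'a \<times> 'a"
    obtain x y where z: "z = (x,y)" by fastforce
    have "dist x y powr p * f (x,y) = dist x y powr p * (a x * b y / t)"
      by (cases "x = y") (auto simp: f_def)
    also have "\<dots> \<le> D * (a x * b y / t)"
      using a0 b0 t0 by (intro mult_right_mono[OF D[of x y]]) auto
    finally show "(case z of (x,y) \<Rightarrow> dist x y powr p) * f z \<le> D * (a (fst z) * b (snd z) / t)"
      by (simp add: z)
  qed
  also have "\<dots> = D * (t * t / t)"
    by (simp add: sumU sum_distrib_left[symmetric] sum_divide_distrib[symmetric] sum_distrib_right[symmetric] tb t_def)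
  also have "\<dots> \<le> D * t" using D0 t0 by (cases "t = 0") auto
  also have "\<dots> \<le> D * (\<Sum>x\<in>UNIV. \<bar>pmf \<alpha> x - pmf \<beta> x\<bar>)"
    unfolding t_def using D0 by (intro mult_left_mono sum_mono) (auto simp: a_def m_def)
  finally show ?thesis .
qed


lemma simplex_compact: "compact {v::real^'a::finite. (\<forall>x. 0 \<le> v$x) \<and> sum (\<lambda>x. v$x) UNIV = 1}"
proof (subst compact_eq_bounded_closed, intro conjI)
  show "bounded {v::real^'a::finite. (\<forall>x. 0 \<le> v$x) \<and> sum (\<lambda>x. v$x) UNIV = 1}"
    unfolding bounded_iff
  proof (intro exI[of _ 1] ballI)
    fix v :: "real^'a" assume "v \<in> {v::real^'a::finite. (\<forall>x. 0 \<le> v$x) \<and> sum (\<lambda>x. v$x) UNIV = 1}"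
    then have "(\<Sum>i\<in>UNIV. \<bar>v $ i\<bar>) = 1" by auto
    then show "norm v \<le> 1" using norm_le_l1_cart[of v] by simp
  qed
  show "closed {v::real^'a::finite. (\<forall>x. 0 \<le> v$x) \<and> sum (\<lambda>x. v$x) UNIV = 1}"
    by (intro closed_Collect_conj closed_Collect_all closed_Collect_le closed_Collect_eq continuous_intros)
qed

lemma embed_vec:
  fixes v :: "real^'a::finite"
  assumes "\<forall>x. 0 \<le> v$x" "sum (\<lambda>x. v$x) UNIV = 1"
  shows "pmf (embed_pmf (\<lambda>x. v$x)) x = v$x"
proof (rule pmf_embed_pmf)
  show "\<And>x. 0 \<le> v$x" using assms by auto
  show "(\<integral>\<^sup>+x. ennreal (v$x) \<partial>count_space UNIV) = 1"
    using assms by (simp add: nn_integral_count_space_finite sum_ennreal)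
qed


theorem corollaryB7:
  fixes p :: real
    and \<theta> :: "('a::{metric_space,finite}) pmf"
    and \<mu> :: "nat \<Rightarrow> 'a pmf"
    and \<phi> \<psi> :: "nat \<Rightarrow> 'a \<Rightarrow> real"
  assumes "1 < p"
    and dense: "\<forall>\<nu>::'a pmf. \<forall>\<epsilon>>0. \<exists>k\<ge>1. wass p (\<mu> k) \<nu> < \<epsilon>"
    and "\<forall>k\<ge>1. \<psi> k = c_transform p (\<phi> k)"
    and "\<forall>k\<ge>1. \<phi> k = c_transform p (\<psi> k)"
    and "\<forall>k\<ge>1. wass_pow p \<theta> (\<mu> k) = integ (\<mu> k) (\<phi> k) + integ \<theta> (\<psi> k)"
  shows "(\<lambda>j. SUP \<nu>::'a pmf. \<bar>wass_pow p \<theta> \<nu>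
            - (MAX k\<in>{1..j}. integ \<nu> (\<phi> k) + integ \<theta> (\<psi> k))\<bar>)
         \<longlonglongrightarrow> 0"
proof -
  note psi_def = assms(3) and phi_def = assms(4) and eqk = assms(5)
  obtain K where K0: "0 \<le> K" and T: "\<forall>x y z::'a. dist x z powr p \<le> dist x y powr p + K * dist y z powr p"
    using K_exists by blast
  define D where "D = Max (range (\<lambda>(x::'a,y::'a). dist x y powr p))"
  have Dge: "dist x y powr p \<le> D" for x y :: 'a
    unfolding D_def apply (rule Max_ge) apply simp by (rule image_eqI[where x="(x,y)"]) auto
  have D0: "0 \<le> D" using Dge[of undefined undefined] by simp
  define N where "N = real CARD('a)"
  have N0: "0 \<le> N" by (simp add: N_def)
  define F where "F \<nu> = wass_pow p \<theta> \<nu>" for \<nu>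
  define G where "G k \<nu> = integ \<nu> (\<phi> k) + integ \<theta> (\<psi> k)" for k \<nu>
  have GF: "G k \<nu> \<le> F \<nu>" if "k \<ge> 1" for k \<nu>
  proof -
    have "\<psi> k x + \<phi> k y \<le> dist x y powr p" for x y
      using ctrans_le[of p "\<phi> k" x y] psi_def that by simp
    then show ?thesis unfolding G_def F_def using G_le_F[of "\<psi> k" "\<phi> k" p \<theta> \<nu>] by simp
  qed
  have HL: "F \<beta> - G k \<beta> \<le> F \<alpha> - G k \<alpha> + 2 * K * wass_pow p \<alpha> \<beta>" if "k \<ge> 1" for k \<alpha> \<beta>
  proof -
    have "\<phi> k y - \<phi> k z \<le> K * dist y z powr p" for y z
      using phi_lip[OF T, of "\<psi> k" y z] phi_def that by simp
    then show ?thesis using lemL[OF T K0, of "\<phi> k" \<theta> \<beta> \<alpha>] unfolding F_def G_def by simp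
  qed
  have H0: "F (\<mu> k) - G k (\<mu> k) = 0" if "k \<ge> 1" for k
    using eqk that unfolding F_def G_def by simp
  define S where "S = {v. (\<forall>x::'a. 0 \<le> v$x) \<and> sum (\<lambda>x. v$x) (UNIV::'a set) = (1::real)}"
  define P where "P v = embed_pmf (\<lambda>x::'a. v$x :: real)" for v
  have Ppmf: "pmf (P v) x = v$x" if "v \<in> S" for v x
    using that unfolding P_def S_def by (intro embed_vec) auto
  show ?thesis
  proof (rule LIMSEQ_I)
    fix \<epsilon> :: real assume "0 < \<epsilon>"
    define \<eta> where "\<eta> = \<epsilon> / (8 * (K + 1))"
    define \<rho> where "\<rho> = \<epsilon> / (8 * (K + 1) * (D + 1) * (N + 1))"
    have \<eta>0: "0 < \<eta>" using \<open>0 < \<epsilon>\<close> K0 by (simp add: \<eta>_def)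
    have \<rho>0: "0 < \<rho>" using \<open>0 < \<epsilon>\<close> K0 D0 N0 by (simp add: \<rho>_def)
    have b1: "2 * K * \<eta> \<le> \<epsilon> / 4"
    proof -
      have "2 * K * \<eta> = (\<epsilon> / 4) * (K / (K + 1))" using K0 by (simp add: \<eta>_def field_simps)
      also have "\<dots> \<le> (\<epsilon> / 4) * 1" using K0 \<open>0 < \<epsilon>\<close> by (intro mult_left_mono) auto
      finally show ?thesis by simp
    qed
    have b2: "2 * K * (D * (N * \<rho>)) \<le> \<epsilon> / 4"
    proof -
      define Q where "Q = (K + 1) * (D + 1) * (N + 1)"
      have Q0: "0 < Q" using K0 D0 N0 by (simp add: Q_def)
      have rq: "\<rho> = \<epsilon> / (8 * Q)" by (simp add: \<rho>_def Q_def mult.assoc)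
      have KQ: "K * D * N \<le> Q" unfolding Q_def using K0 D0 N0 by (intro mult_mono) auto
      have "2 * K * (D * (N * \<rho>)) = (\<epsilon> / 4) * ((K * D * N) / Q)"
        using Q0 by (simp add: rq field_simps)
      also have "\<dots> \<le> (\<epsilon> / 4) * 1" using KQ Q0 \<open>0 < \<epsilon>\<close>
        by (intro mult_left_mono) auto
      finally show ?thesis by simp
    qed
    have ex: "\<exists>k\<ge>1. wass_pow p (\<mu> k) \<nu> < \<eta>" for \<nu>
    proof -
      have "0 < \<eta> powr (1/p)" using \<eta>0 by simp
      then obtain k where "k \<ge> 1" "wass p (\<mu> k) \<nu> < \<eta> powr (1/p)" using dense by blast
      then show ?thesis using wass_small[of p] \<eta>0 \<open>1 < p\<close> by force
    qed
    define kf where "kf v = (SOME k. k \<ge> 1 \<and> wass_pow p (\<mu> k) (P v) < \<eta>)" for v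
    have kf: "kf v \<ge> 1 \<and> wass_pow p (\<mu> (kf v)) (P v) < \<eta>" for v
      unfolding kf_def by (rule someI_ex) (rule ex)
    have "compact S" unfolding S_def by (rule simplex_compact)
    then obtain C where C: "C \<subseteq> S" "finite C" "S \<subseteq> (\<Union>v\<in>C. ball v \<rho>)"
      by (rule compactE_image[of S S "\<lambda>v. ball v \<rho>"]) (use \<rho>0 in force)+
    define J where "J = Max (insert 1 (kf ` C))"
    have bound: "\<bar>F \<nu> - (MAX k\<in>{1..j}. G k \<nu>)\<bar> \<le> \<epsilon> / 2" if "j \<ge> J" for j \<nu>
    proof -
      define w where "w = (\<chi> x. pmf \<nu> x)"
      have "w \<in> S" unfolding S_def w_def by (auto intro: sum_pmf_eq_1)
      then obtain v where v: "v \<in> C" "dist v w < \<rho>" using C(3) by auto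
      have vS: "v \<in> S" using v C(1) by auto
      define k where "k = kf v"
      have k1: "k \<ge> 1" using kf k_def by auto
      have kJ: "k \<le> J" unfolding J_def k_def using v C(2) by (intro Max_ge) auto
      have "F (P v) - G k (P v) \<le> F (\<mu> k) - G k (\<mu> k) + 2 * K * wass_pow p (\<mu> k) (P v)"
        by (rule HL[OF k1])
      also have "\<dots> \<le> 2 * K * \<eta>" using H0[OF k1] kf[of v] K0 unfolding k_def
        by (simp add: mult_left_mono)
      finally have h1: "F (P v) - G k (P v) \<le> 2 * K * \<eta>" .
      have sumb: "(\<Sum>x\<in>UNIV. \<bar>pmf (P v) x - pmf \<nu> x\<bar>) \<le> N * \<rho>"
      proof -
        have "(\<Sum>x\<in>UNIV. \<bar>pmf (P v) x - pmf \<nu> x\<bar>) \<le> of_nat (card (UNIV::'a set)) * dist v w"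
        proof (rule sum_bounded_above)
          fix x :: 'a
          have "\<bar>pmf (P v) x - pmf \<nu> x\<bar> = \<bar>(v - w) $ x\<bar>" by (simp add: Ppmf[OF vS] w_def)
          also have "\<dots> \<le> norm (v - w)" by (rule component_le_norm_cart)
          finally show "\<bar>pmf (P v) x - pmf \<nu> x\<bar> \<le> dist v w" by (simp add: dist_norm)
        qed
        also have "\<dots> \<le> N * \<rho>" using v(2) N0 unfolding N_def by (intro mult_left_mono) auto
        finally show ?thesis .
      qed
      have "F \<nu> - G k \<nu> \<le> F (P v) - G k (P v) + 2 * K * wass_pow p (P v) \<nu>"
        by (rule HL[OF k1])
      also have "\<dots> \<le> 2 * K * \<eta> + 2 * K * (D * (N * \<rho>))"
      proof -
        have "wass_pow p (P v) \<nu> \<le> D * (N * \<rho>)"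
          using tv_bound[OF Dge D0, of "P v" \<nu>] sumb D0 by (meson mult_left_mono order_trans)
        then have "2 * K * wass_pow p (P v) \<nu> \<le> 2 * K * (D * (N * \<rho>))" using K0 by (simp add: mult_left_mono)
        then show ?thesis using h1 by linarith
      qed
      finally have hk: "F \<nu> - G k \<nu> \<le> \<epsilon> / 2" using b1 b2 by linarith
      have jne: "{1..j} \<noteq> {}" using k1 kJ that by auto
      have "G k \<nu> \<le> (MAX k\<in>{1..j}. G k \<nu>)" using k1 kJ that by (intro Max_ge) auto
      moreover have "(MAX k\<in>{1..j}. G k \<nu>) \<le> F \<nu>" using jne GF by (subst Max_le_iff) auto
      ultimately show ?thesis using hk by linarith
    qed
    show "\<exists>no. \<forall>n\<ge>no. norm ((SUP \<nu>::'a pmf. \<bar>wass_pow p \<theta> \<nu>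
            - (MAX k\<in>{1..n}. integ \<nu> (\<phi> k) + integ \<theta> (\<psi> k))\<bar>) - 0) < \<epsilon>"
    proof (intro exI[of _ J] allI impI)
      fix n assume "J \<le> n"
      have le: "\<bar>F \<nu> - (MAX k\<in>{1..n}. G k \<nu>)\<bar> \<le> \<epsilon> / 2" for \<nu> using bound[OF \<open>J \<le> n\<close>] .
      have up: "(SUP \<nu>. \<bar>F \<nu> - (MAX k\<in>{1..n}. G k \<nu>)\<bar>) \<le> \<epsilon> / 2"
        by (rule cSUP_least) (use le in auto)
      have lo: "0 \<le> (SUP \<nu>. \<bar>F \<nu> - (MAX k\<in>{1..n}. G k \<nu>)\<bar>)"
      proof -
        have "\<bar>F \<theta> - (MAX k\<in>{1..n}. G k \<theta>)\<bar> \<le> (SUP \<nu>. \<bar>F \<nu> - (MAX k\<in>{1..n}. G k \<nu>)\<bar>)"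
          by (rule cSUP_upper) (use le in \<open>auto intro!: bdd_aboveI2[where M="\<epsilon>/2"]\<close>)
        then show ?thesis by linarith
      qed
      show "norm ((SUP \<nu>::'a pmf. \<bar>wass_pow p \<theta> \<nu>
            - (MAX k\<in>{1..n}. integ \<nu> (\<phi> k) + integ \<theta> (\<psi> k))\<bar>) - 0) < \<epsilon>"
        using up lo \<open>0 < \<epsilon>\<close> unfolding F_def G_def by simp
    qed
  qed
qed

end
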